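(* Let $\widehat{\mathbf M}\otimes\mathcal A_\psi$ be the product of a gMDP $\widehat{\mathbf M}$ (state space $\hat{\mathbb X}$, input space $\hat{\mathbb U}$) with the DFA $\mathcal A_\psi=(Q,q_0,\Sigma,F,\tau)$, let $\delta\ge 0$, and let $\mu:\hat{\mathbb X}\times Q\to\mathcal P(\hat{\mathbb U})$ be any universally measurable map. Then: (i) $\mathbf T^\mu_\delta$ is monotone: if $V(\hat x,q)\ge W(\hat x,q)$ for all $(\hat x,q)\in\hat{\mathbb X}\times Q$, then $\mathbf T^\mu_\delta(V)(\hat x,q)\ge\mathbf T^\mu_\delta(W)(\hat x,q)$ for all $(\hat x,q)$; (ii) with $V_0=0$, the sequence $\{(\mathbf T^\mu_\delta)^l(V_0)\}_{l\ge0}$ is monotonically increasing and converges pointwise; (iii) if $\delta>0$, the fixed-point equation $V=\mathbf T^\mu_\delta(V)$ (for functions $V:\hat{\mathbb X}\times Q\to[0,1]$) has a unique solution, namely $V^\mu_\infty:=\lim_{l\to\infty}(\mathbf T^\mu_\delta)^l(V_0)$ with $V_0=0$.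
   Context: A gMDP is a tuple $\widehat{\mathbf M}=(\hat{\mathbb X},\hat{\mathbb U},\mathbb Y,\hat x_0,\hat{\mathbf t},\hat h)$ with Polish state space $\hat{\mathbb X}$, Polish input space $\hat{\mathbb U}$, metric output space $(\mathbb Y,\mathbf d_{\mathbb Y})$, initial state $\hat x_0$, stochastic kernel $\hat{\mathbf t}(\cdot\mid\hat x,\hat u)$ on $\hat{\mathbb X}$, and measurable output map $\hat h:\hat{\mathbb X}\to\mathbb Y$. $\mathsf{AP}$ is a finite set of atomic propositions, $\Sigma=2^{\mathsf{AP}}$, $\mathsf L:\mathbb Y\to\Sigma$ a measurable labelling function; $\psi$ is an scLTL formula and $\mathcal A_\psi=(Q,q_0,\Sigma,F,\tau)$ a deterministic finite automaton (finite $Q$, accepting set $F\subseteq Q$, transition function $\tau:Q\times\Sigma\to Q$) accepting exactly the words satisfying $\psi$. The product $\widehat{\mathbf M}\otimes\mathcal A_\psi$ is the gMDP with states $\hat{\mathbb X}\times Q$, inputs $\hat{\mathbb U}$, initial state $(\hat x_0,\tau(q_0,\mathsf L(\hat h(\hat x_0))))$ and kernel $\bar{\mathbf t}(d\hat x'\times\{q'\}\mid\hat x,q,u)=\mathbf 1_{\{q'\}}(\tau(q,\mathsf L(\hat h(\hat x'))))\,\hat{\mathbf t}(d\hat x'\mid\hat x,u)$. For $V:\hat{\mathbb X}\times Q\to[0,1]$, the Bellman operator is $\mathbf T^\mu(V)(\hat x,q)=\int\max\{\mathbf 1_F(q'),V(\hat x',q')\}\,\bar{\mathbf t}(d\hat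 x'\times\{q'\}\mid\hat x,q,\mu(\hat x,q))$ (input drawn from $\mu(\hat x,q)$), and the $\delta$-robust operator is $\mathbf T^\mu_\delta(V)(\hat x,q)=\mathbf L(\mathbf T^\mu(V)(\hat x,q)-\delta)$, where $\mathbf L(r)=\min(1,\max(0,r))$. *)

theory Defs
  imports "HOL-Probability.Probability"
begin

definition univ_measurable :: "'b measure \<Rightarrow> ('a::topological_space \<Rightarrow> 'b) \<Rightarrow> bool" where
  "univ_measurable N f \<longleftrightarrow>
     (\<forall>P::'a measure. prob_space P \<and> sets P = sets borel \<longrightarrow> f \<in> completion P \<rightarrow>\<^sub>M N)"

definition clip01 :: "real \<Rightarrow> real" where
  "clip01 r = min 1 (max 0 r)"

text \<open>The product kernel
  tbar(dx' x {q'} | x,q,u) = 1_{q'}(tau(q, L(h x'))) t(dx'|x,u) is written out: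
  integrating over (x',q') amounts to integrating over x' with q' = tau q (L (h x')).  Integrals are taken w.r.t. completed measures,
  since iterates are only universally measurable.\<close>
definition bellman ::
  "('x \<Rightarrow> 'u \<Rightarrow> 'x measure) \<Rightarrow> ('x \<Rightarrow> 'y) \<Rightarrow> ('y \<Rightarrow> 'ap set) \<Rightarrow>
   ('q \<Rightarrow> 'ap set \<Rightarrow> 'q) \<Rightarrow> 'q set \<Rightarrow> ('x \<times> 'q \<Rightarrow> 'u measure) \<Rightarrow>
   ('x \<times> 'q \<Rightarrow> real) \<Rightarrow> 'x \<times> 'q \<Rightarrow> real" where
  "bellman t h L \<tau> F \<mu> V = (\<lambda>(x, q). enn2real
     (\<integral>\<^sup>+ u. (\<integral>\<^sup>+ x'. ennreal (max (indicator F (\<tau> q (L (h x')))) (V (x', \<tau> q (L (h x')))))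
        \<partial>completion (t x u)) \<partial>completion (\<mu> (x, q))))"

definition robust_bellman ::
  "('x \<Rightarrow> 'u \<Rightarrow> 'x measure) \<Rightarrow> ('x \<Rightarrow> 'y) \<Rightarrow> ('y \<Rightarrow> 'ap set) \<Rightarrow>
   ('q \<Rightarrow> 'ap set \<Rightarrow> 'q) \<Rightarrow> 'q set \<Rightarrow> ('x \<times> 'q \<Rightarrow> 'u measure) \<Rightarrow> real \<Rightarrow>
   ('x \<times> 'q \<Rightarrow> real) \<Rightarrow> 'x \<times> 'q \<Rightarrow> real" where
  "robust_bellman t h L \<tau> F \<mu> \<delta> V = (\<lambda>s. clip01 (bellman t h L \<tau> F \<mu> V s - \<delta>))"

end

theory Submission
  imports Defs
begin

lemma measurable_complete_AE:
  fixes f g :: "'a \<Rightarrow> 'b::topological_space"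
  assumes g: "g \<in> borel_measurable (completion M)" and ae: "AE x in completion M. f x = g x"
  shows "f \<in> borel_measurable (completion M)"
proof (rule measurableI)
  fix B :: "'b set" assume B: "B \<in> sets borel"
  have A: "g -` B \<inter> space (completion M) \<in> sets (completion M)"
    using g B by (rule measurable_sets)
  have "AE x in completion M. x \<in> g -` B \<inter> space (completion M) \<longleftrightarrow> x \<in> f -` B \<inter> space (completion M)"
    using ae by (rule AE_mp) (auto intro!: AE_I2)
  then show "f -` B \<inter> space (completion M) \<in> sets (completion M)"
    using A by (rule completion.in_sets_AE) auto
qed auto

lemma G:
  fixes \<kappa> :: "'a \<Rightarrow> 'x::topological_space measure" and f :: "'x \<Rightarrow> ennreal"
  assumes A: "prob_space A" and \<kappa>: "\<kappa> \<in> A \<rightarrow>\<^sub>M prob_algebra (borel::'x measure)"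
    and f: "\<And>N. prob_space N \<Longrightarrow> sets N = sets (borel::'x measure) \<Longrightarrow> f \<in> borel_measurable (completion N)"
  shows "\<exists>g\<in>borel_measurable A. AE a in A. (\<integral>\<^sup>+ y. f y \<partial>completion (\<kappa> a)) = g a"
    and "(\<integral>\<^sup>+ a. (\<integral>\<^sup>+ y. f y \<partial>completion (\<kappa> a)) \<partial>completion A) = (\<integral>\<^sup>+ y. f y \<partial>completion (A \<bind> \<kappa>))"
proof -
  have Asp: "A \<in> space (prob_algebra A)" using A by (simp add: space_prob_algebra)
  define \<nu> where "\<nu> = A \<bind> \<kappa>"
  have \<nu>p: "prob_space \<nu>" unfolding \<nu>_def by (rule prob_space_bind'[OF Asp \<kappa>])
  have \<nu>s: "sets \<nu> = sets borel" unfolding \<nu>_def by (rule sets_bind'[OF Asp \<kappa>])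
  have \<nu>sp: "space \<nu> = UNIV" using sets_eq_imp_space_eq[OF \<nu>s] by simp
  have \<kappa>s: "\<kappa> \<in> A \<rightarrow>\<^sub>M subprob_algebra borel" using \<kappa> by (rule measurable_prob_algebraD)
  have \<kappa>a: "prob_space (\<kappa> a) \<and> sets (\<kappa> a) = sets borel" if "a \<in> space A" for a
    using measurable_space[OF \<kappa> that] by (auto simp: space_prob_algebra)
  obtain g where g: "g \<in> borel_measurable \<nu>" and fg: "AE y in \<nu>. f y = g y"
    using completion_ex_borel_measurable[OF f[OF \<nu>p \<nu>s]] by blast
  have gb: "g \<in> borel_measurable borel" using g \<nu>s by (simp cong: measurable_cong_sets)
  obtain N' where N': "N' \<in> null_sets \<nu>" "{y \<in> space \<nu>. \<not> f y = g y} \<subseteq> N'"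
    using fg unfolding eventually_ae_filter by blast
  have N'b: "N' \<in> sets borel" using N' \<nu>s by auto
  have "AE y in \<nu>. y \<notin> N'" using N'(1) by (rule AE_not_in)
  then have "AE a in A. AE y in \<kappa> a. y \<notin> N'"
    unfolding \<nu>_def using AE_bind[OF \<kappa>s, of "\<lambda>y. y \<notin> N'"] N'b by simp
  then have ae: "AE a in A. (\<integral>\<^sup>+ y. f y \<partial>completion (\<kappa> a)) = (\<integral>\<^sup>+ y. g y \<partial>\<kappa> a)"
  proof (rule AE_mp, intro AE_I2 impI)
    fix a assume a: "a \<in> space A" and ae: "AE y in \<kappa> a. y \<notin> N'"
    have "AE y in \<kappa> a. f y = g y" using ae by (rule AE_mp) (use N' \<nu>sp in \<open>auto intro!: AE_I2\<close>)
    then have "(\<integral>\<^sup>+ y. f y \<partial>completion (\<kappa> a)) = (\<integral>\<^sup>+ y. g y \<partial>completion (\<kappa> a))"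
      by (intro nn_integral_cong_AE AE_completion)
    also have "\<dots> = (\<integral>\<^sup>+ y. g y \<partial>\<kappa> a)" by (rule nn_integral_completion)
    finally show "(\<integral>\<^sup>+ y. f y \<partial>completion (\<kappa> a)) = (\<integral>\<^sup>+ y. g y \<partial>\<kappa> a)" .
  qed
  have gm: "(\<lambda>a. \<integral>\<^sup>+ y. g y \<partial>\<kappa> a) \<in> borel_measurable A"
    by (rule measurable_compose[OF \<kappa>s nn_integral_measurable_subprob_algebra[OF gb]])
  show "\<exists>g\<in>borel_measurable A. AE a in A. (\<integral>\<^sup>+ y. f y \<partial>completion (\<kappa> a)) = g a"
    using ae by (intro bexI[OF _ gm]) simp
  have "(\<integral>\<^sup>+ a. (\<integral>\<^sup>+ y. f y \<partial>completion (\<kappa> a)) \<partial>completion A) = (\<integral>\<^sup>+ a. (\<integral>\<^sup>+ y. g y \<partial>\<kappa> a) \<partial>completion A)"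
    by (intro nn_integral_cong_AE AE_completion ae)
  also have "\<dots> = (\<integral>\<^sup>+ a. (\<integral>\<^sup>+ y. g y \<partial>\<kappa> a) \<partial>A)" by (rule nn_integral_completion)
  also have "\<dots> = (\<integral>\<^sup>+ y. g y \<partial>\<nu>)" unfolding \<nu>_def by (rule nn_integral_bind[OF gb \<kappa>s, symmetric])
  also have "\<dots> = (\<integral>\<^sup>+ y. g y \<partial>completion \<nu>)" by (rule nn_integral_completion[symmetric])
  also have "\<dots> = (\<integral>\<^sup>+ y. f y \<partial>completion \<nu>)"
    using fg by (intro nn_integral_cong_AE AE_completion) (auto elim: AE_mp)
  finally show "(\<integral>\<^sup>+ a. (\<integral>\<^sup>+ y. f y \<partial>completion (\<kappa> a)) \<partial>completion A) = (\<integral>\<^sup>+ y. f y \<partial>completion (A \<bind> \<kappa>))"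
    unfolding \<nu>_def .
qed


definition univ :: "('x::topological_space \<times> 'q \<Rightarrow> real) \<Rightarrow> bool" where
  "univ V \<longleftrightarrow> (\<forall>q. univ_measurable borel (\<lambda>x. V (x, q)))"

locale bsetup =
  fixes t :: "'x::polish_space \<Rightarrow> 'u::polish_space \<Rightarrow> 'x measure"
    and h :: "'x \<Rightarrow> 'y::metric_space"
    and L :: "'y \<Rightarrow> 'ap::finite set"
    and \<tau> :: "'q::finite \<Rightarrow> 'ap set \<Rightarrow> 'q"
    and F :: "'q set"
    and \<mu> :: "'x \<times> 'q \<Rightarrow> 'u measure"
    and \<delta> :: real
  assumes kernel_prob: "\<And>x u. prob_space (t x u)"
    and kernel_sets: "\<And>x u. sets (t x u) = sets (borel :: 'x measure)"
    and kernel_meas: "(\<lambda>(x, u). t x u) \<in> (borel :: ('x \<times> 'u) measure) \<rightarrow>\<^sub>M prob_algebra borel"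
    and h_meas: "h \<in> borel_measurable borel"
    and L_meas: "L \<in> (borel :: 'y measure) \<rightarrow>\<^sub>M count_space UNIV"
    and delta_nonneg: "\<delta> \<ge> 0"
    and mu_prob: "\<And>x q. prob_space (\<mu> (x, q))"
    and mu_sets: "\<And>x q. sets (\<mu> (x, q)) = sets (borel :: 'u measure)"
    and mu_univ: "\<And>q. univ_measurable (prob_algebra (borel :: 'u measure)) (\<lambda>x. \<mu> (x, q))"
begin

definition c :: "'q \<Rightarrow> 'x \<Rightarrow> 'q" where "c q x' = \<tau> q (L (h x'))"
definition kap :: "'x \<times> 'q \<Rightarrow> 'x measure" where "kap s = \<mu> s \<bind> t (fst s)"
definition m :: "'x \<times> 'q \<Rightarrow> 'x measure" where "m s = completion (kap s)"
definition fV :: "('x \<times> 'q \<Rightarrow> real) \<Rightarrow> 'q \<Rightarrow> 'x \<Rightarrow> real" where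
  "fV V q x' = max (indicator F (c q x')) (V (x', c q x'))"

lemma t_meas: "t x \<in> (borel :: 'u measure) \<rightarrow>\<^sub>M prob_algebra borel"
proof -
  have "(\<lambda>u. (x, u)) \<in> (borel :: 'u measure) \<rightarrow>\<^sub>M (borel \<Otimes>\<^sub>M borel)"
    by measurable
  then have "(\<lambda>u. (x, u)) \<in> (borel :: 'u measure) \<rightarrow>\<^sub>M (borel :: ('x \<times> 'u) measure)"
    by (simp add: borel_prod)
  from measurable_compose[OF this kernel_meas] show ?thesis by simp
qed

lemma mu_space: "\<mu> s \<in> space (prob_algebra borel)"
  using mu_prob mu_sets by (cases s) (auto simp: space_prob_algebra)

lemma t_meas_mu: "t x \<in> \<mu> s \<rightarrow>\<^sub>M prob_algebra borel"
  using t_meas by (cases s) (simp add: mu_sets cong: measurable_cong_sets)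

lemma kap_prob: "prob_space (kap s)"
  unfolding kap_def by (rule prob_space_bind'[OF mu_space t_meas])

lemma kap_sets: "sets (kap s) = sets borel"
  unfolding kap_def by (rule sets_bind'[OF mu_space t_meas])

lemma m_prob: "prob_space (m s)"
  unfolding m_def using kap_prob by (rule prob_space.prob_space_completion)

lemma kap_meas:
  assumes P: "prob_space P" "sets P = sets (borel :: 'x measure)"
  shows "(\<lambda>x. kap (x, q)) \<in> completion P \<rightarrow>\<^sub>M prob_algebra borel"
proof -
  have mu: "(\<lambda>x. \<mu> (x, q)) \<in> completion P \<rightarrow>\<^sub>M prob_algebra borel"
    using mu_univ[of q] P unfolding univ_measurable_def by blast
  have idP: "(\<lambda>x. x) \<in> completion P \<rightarrow>\<^sub>M (borel :: 'x measure)"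
    by (rule measurable_completion) (simp add: P(2) cong: measurable_cong_sets)
  have "(\<lambda>p. (fst p, snd p)) \<in> (completion P \<Otimes>\<^sub>M (borel :: 'u measure)) \<rightarrow>\<^sub>M (borel \<Otimes>\<^sub>M borel)"
    by (intro measurable_Pair measurable_compose[OF measurable_fst idP] measurable_snd)
  then have "(\<lambda>p. p) \<in> (completion P \<Otimes>\<^sub>M (borel :: 'u measure)) \<rightarrow>\<^sub>M (borel :: ('x \<times> 'u) measure)"
    by (simp add: borel_prod)
  from measurable_compose[OF this kernel_meas]
  have "(\<lambda>(x, y). t x y) \<in> (completion P \<Otimes>\<^sub>M (borel :: 'u measure)) \<rightarrow>\<^sub>M prob_algebra borel" .
  from measurable_bind_prob_space2[OF mu this]
  show ?thesis unfolding kap_def by simp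
qed


lemma c_meas: "c q \<in> completion N \<rightarrow>\<^sub>M count_space UNIV" if "sets N = sets (borel :: 'x measure)"
proof -
  have "(\<lambda>x'. L (h x')) \<in> (borel :: 'x measure) \<rightarrow>\<^sub>M count_space UNIV"
    using h_meas L_meas by (rule measurable_compose)
  then have "(\<lambda>x'. \<tau> q (L (h x'))) \<in> (borel :: 'x measure) \<rightarrow>\<^sub>M count_space UNIV"
    by (rule measurable_compose) simp
  then show ?thesis unfolding c_def
    by (intro measurable_completion) (simp add: measurable_cong_sets[OF that refl])
qed

lemma fV_meas:
  assumes V: "univ V" and N: "prob_space N" "sets N = sets (borel :: 'x measure)"
  shows "fV V q \<in> borel_measurable (completion N)"
proof -
  have Vq: "(\<lambda>x. V (x, q')) \<in> borel_measurable (completion N)" for q'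
    using V N unfolding univ_def univ_measurable_def by blast
  have 1: "(\<lambda>x'. V (x', c q x')) \<in> borel_measurable (completion N)"
    by (rule measurable_compose_countable'[where I=UNIV, OF Vq c_meas[OF N(2)]]) simp
  have 2: "(\<lambda>x'. indicator F (c q x') :: real) \<in> borel_measurable (completion N)"
    by (rule measurable_compose[OF c_meas[OF N(2)]]) simp
  show ?thesis unfolding fV_def using 1 2 by (intro borel_measurable_max)
qed

lemma fV_nonneg: "0 \<le> fV V q x"
  unfolding fV_def by (simp add: le_max_iff_disj)

lemma bellman_nn:
  assumes V: "univ V"
  shows "bellman t h L \<tau> F \<mu> V s = enn2real (\<integral>\<^sup>+ x'. ennreal (fV V (snd s) x') \<partial>m s)"
proof (cases s)
  case (Pair x q)
  have f: "(\<lambda>x'. ennreal (fV V q x')) \<in> borel_measurable (completion N)"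
    if "prob_space N" "sets N = sets (borel :: 'x measure)" for N
    using fV_meas[OF V that] by measurable
  have "(\<integral>\<^sup>+ u. (\<integral>\<^sup>+ y. ennreal (fV V q y) \<partial>completion (t x u)) \<partial>completion (\<mu> (x, q)))
      = (\<integral>\<^sup>+ y. ennreal (fV V q y) \<partial>completion (\<mu> (x, q) \<bind> t x))"
    by (rule G(2)[OF mu_prob t_meas_mu f])
  then show ?thesis
    unfolding Pair bellman_def m_def kap_def fV_def c_def by simp
qed

lemma bellman_int:
  assumes V: "univ V"
  shows "bellman t h L \<tau> F \<mu> V s = integral\<^sup>L (m s) (fV V (snd s))"
  unfolding bellman_nn[OF V]
proof (rule enn2real_nn_integral_eq_integral)
  show "fV V (snd s) \<in> borel_measurable (m s)"
    unfolding m_def by (rule fV_meas[OF V kap_prob kap_sets])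
qed (auto simp: fV_nonneg)

lemma bellman_univ:
  assumes V: "univ V"
  shows "univ (bellman t h L \<tau> F \<mu> V)"
  unfolding univ_def univ_measurable_def
proof (intro allI impI)
  fix q and P :: "'x measure" assume P: "prob_space P \<and> sets P = sets borel"
  have f: "(\<lambda>x'. ennreal (fV V q x')) \<in> borel_measurable (completion N)"
    if "prob_space N" "sets N = sets (borel :: 'x measure)" for N
    using fV_meas[OF V that] by measurable
  have A: "prob_space (completion P)" using P by (simp add: prob_space.prob_space_completion)
  obtain g where g: "g \<in> borel_measurable (completion P)"
    and ae: "AE a in completion P. (\<integral>\<^sup>+ y. ennreal (fV V q y) \<partial>completion (kap (a, q))) = g a"
    using G(1)[OF A kap_meas[OF conjunct1[OF P] conjunct2[OF P]] f] by blast
  have "(\<lambda>a. \<integral>\<^sup>+ y. ennreal (fV V q y) \<partial>completion (kap (a, q))) \<in> borel_measurable (completion P)"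
    by (rule measurable_complete_AE[OF g ae])
  then have "(\<lambda>a. enn2real (\<integral>\<^sup>+ y. ennreal (fV V q y) \<partial>m (a, q))) \<in> borel_measurable (completion P)"
    unfolding m_def by measurable
  then show "(\<lambda>x. bellman t h L \<tau> F \<mu> V (x, q)) \<in> completion P \<rightarrow>\<^sub>M borel"
    by (simp add: bellman_nn[OF V])
qed

lemma robust_univ:
  assumes V: "univ V"
  shows "univ (robust_bellman t h L \<tau> F \<mu> \<delta> V)"
  unfolding univ_def univ_measurable_def robust_bellman_def clip01_def
proof (intro allI impI)
  fix q and P :: "'x measure" assume P: "prob_space P \<and> sets P = sets borel"
  have [measurable]: "(\<lambda>x. bellman t h L \<tau> F \<mu> V (x, q)) \<in> borel_measurable (completion P)"
    using bellman_univ[OF V] P unfolding univ_def univ_measurable_def by blast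
  show "(\<lambda>x. min 1 (max 0 (bellman t h L \<tau> F \<mu> V (x, q) - \<delta>))) \<in> borel_measurable (completion P)"
    by measurable
qed


abbreviation "Tr \<equiv> robust_bellman t h L \<tau> F \<mu> \<delta>"

lemma inner_le1:
  assumes "\<And>z. V z \<le> 1"
  shows "(\<integral>\<^sup>+ y. ennreal (max (indicator F (\<tau> q (L (h y)))) (V (y, \<tau> q (L (h y))))) \<partial>completion (t x u)) \<le> 1"
proof -
  interpret prob_space "completion (t x u)"
    using kernel_prob by (rule prob_space.prob_space_completion)
  show ?thesis using assms by (intro nn_integral_le_const AE_I2) (auto simp: indicator_def)
qed

lemma bellman_mono:
  assumes V1: "\<And>z. V z \<le> 1" and WV: "\<And>z. W z \<le> V z"
  shows "bellman t h L \<tau> F \<mu> W s \<le> bellman t h L \<tau> F \<mu> V s"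
proof (cases s)
  case (Pair x q)
  interpret prob_space "completion (\<mu> (x, q))"
    using mu_prob by (rule prob_space.prob_space_completion)
  have "(\<integral>\<^sup>+ u. (\<integral>\<^sup>+ y. ennreal (max (indicator F (\<tau> q (L (h y)))) (V (y, \<tau> q (L (h y))))) \<partial>completion (t x u)) \<partial>completion (\<mu> (x, q))) \<le> 1"
    using inner_le1[OF V1] by (intro nn_integral_le_const AE_I2) auto
  then have fin: "(\<integral>\<^sup>+ u. (\<integral>\<^sup>+ y. ennreal (max (indicator F (\<tau> q (L (h y)))) (V (y, \<tau> q (L (h y))))) \<partial>completion (t x u)) \<partial>completion (\<mu> (x, q))) < top"
    using order.strict_trans1 by fastforce
  show ?thesis unfolding Pair bellman_def
    by (simp, intro enn2real_mono fin nn_integral_mono ennreal_leI max.mono WV order.refl)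
qed

lemma clip01_mono: "a \<le> b \<Longrightarrow> clip01 a \<le> clip01 b"
  unfolding clip01_def by simp

lemma clip01_range: "0 \<le> clip01 a" "clip01 a \<le> 1"
  unfolding clip01_def by auto

lemma T_range: "0 \<le> Tr V s" "Tr V s \<le> 1"
  unfolding robust_bellman_def by (simp_all add: clip01_range)

lemma T_mono:
  assumes V1: "\<And>z. V z \<le> 1" and WV: "\<And>z. W z \<le> V z"
  shows "Tr W s \<le> Tr V s"
  unfolding robust_bellman_def using bellman_mono[OF V1 WV] by (intro clip01_mono) simp

definition Vn :: "nat \<Rightarrow> 'x \<times> 'q \<Rightarrow> real" where "Vn l = (Tr ^^ l) (\<lambda>_. 0)"

lemma Vn_Suc: "Vn (Suc l) = Tr (Vn l)" unfolding Vn_def by simp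

lemma Vn_range: "0 \<le> Vn l s" "Vn l s \<le> 1"
  by (cases l; simp add: Vn_def T_range)+

lemma Vn_mono_Suc: "Vn l s \<le> Vn (Suc l) s"
proof (induction l arbitrary: s)
  case 0 show ?case by (simp add: Vn_def T_range)
next
  case (Suc l)
  have "Tr (Vn l) s \<le> Tr (Vn (Suc l)) s" by (intro T_mono Vn_range Suc)
  then show ?case by (simp add: Vn_Suc)
qed

lemma Vn_incseq: "incseq (\<lambda>l. Vn l s)"
  by (rule incseq_SucI) (rule Vn_mono_Suc)

lemma Vn_lim: "(\<lambda>l. Vn l s) \<longlonglongrightarrow> (SUP l. Vn l s)"
  by (rule LIMSEQ_incseq_SUP[OF _ Vn_incseq]) (auto intro!: bdd_aboveI[where M=1] simp: Vn_range)

definition Vinf :: "'x \<times> 'q \<Rightarrow> real" where "Vinf s = lim (\<lambda>l. Vn l s)"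

lemma Vinf_lim: "(\<lambda>l. Vn l s) \<longlonglongrightarrow> Vinf s"
  unfolding Vinf_def using Vn_lim by (rule convergentI[THEN convergent_LIMSEQ_iff[THEN iffD1]])

lemma Vinf_range: "0 \<le> Vinf s" "Vinf s \<le> 1"
  using Vinf_lim[of s] by (auto intro: LIMSEQ_le_const LIMSEQ_le_const2 simp: Vn_range)

lemma Vn_univ: "univ (Vn l)"
proof (induction l)
  case 0 show ?case by (simp add: Vn_def univ_def univ_measurable_def)
next
  case (Suc l) then show ?case unfolding Vn_Suc by (rule robust_univ)
qed

lemma Vinf_univ: "univ Vinf"
  unfolding univ_def univ_measurable_def
proof (intro allI impI)
  fix q and P :: "'x measure" assume P: "prob_space P \<and> sets P = sets borel"
  show "(\<lambda>x. Vinf (x, q)) \<in> borel_measurable (completion P)"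
  proof (rule borel_measurable_LIMSEQ_real)
    show "(\<lambda>l. Vn l (x, q)) \<longlonglongrightarrow> Vinf (x, q)" for x by (rule Vinf_lim)
    show "(\<lambda>x. Vn l (x, q)) \<in> borel_measurable (completion P)" for l
      using Vn_univ[of l] P unfolding univ_def univ_measurable_def by blast
  qed
qed

lemma Vinf_least:
  assumes V01: "\<And>z. 0 \<le> V z" "\<And>z. V z \<le> 1" and fixp: "Tr V = V"
  shows "Vinf s \<le> V s"
proof -
  have "Vn l z \<le> V z" for l z
  proof (induction l arbitrary: z)
    case 0 show ?case by (simp add: Vn_def V01)
  next
    case (Suc l)
    have "Tr (Vn l) z \<le> Tr V z" by (intro T_mono V01 Suc)
    then show ?case by (simp add: Vn_Suc fixp)
  qed
  then show ?thesis by (intro LIMSEQ_le_const2[OF Vinf_lim[of s]]) blast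
qed


lemma Vinf_fix: "Tr Vinf = Vinf"
proof
  fix s :: "'x \<times> 'q"
  obtain x q where s: "s = (x, q)" by (cases s)
  interpret prob_space "m s" by (rule m_prob)
  have meas: "fV V q \<in> borel_measurable (m s)" if "univ V" for V
    unfolding m_def by (rule fV_meas[OF that kap_prob kap_sets])
  have lim_int: "(\<lambda>l. integral\<^sup>L (m s) (fV (Vn l) q)) \<longlonglongrightarrow> integral\<^sup>L (m s) (fV Vinf q)"
  proof (rule integral_dominated_convergence[where w="\<lambda>_. 1"])
    show "fV Vinf q \<in> borel_measurable (m s)" by (rule meas[OF Vinf_univ])
    show "fV (Vn l) q \<in> borel_measurable (m s)" for l by (rule meas[OF Vn_univ])
    show "integrable (m s) (\<lambda>_. 1::real)" by simp
    show "AE y in m s. (\<lambda>l. fV (Vn l) q y) \<longlonglongrightarrow> fV Vinf q y"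
      unfolding fV_def by (intro AE_I2 tendsto_max tendsto_const Vinf_lim)
    show "AE y in m s. norm (fV (Vn l) q y) \<le> 1" for l
      using fV_nonneg[of "Vn l" q] Vn_range[of l] unfolding fV_def
      by (intro AE_I2) (auto simp: indicator_def)
  qed
  have "(\<lambda>l. Tr (Vn l) s) \<longlonglongrightarrow> clip01 (integral\<^sup>L (m s) (fV Vinf q) - \<delta>)"
    unfolding robust_bellman_def bellman_int[OF Vn_univ] s clip01_def snd_conv
    by (intro tendsto_min tendsto_max tendsto_const tendsto_diff lim_int[unfolded s])
  also have "clip01 (integral\<^sup>L (m s) (fV Vinf q) - \<delta>) = Tr Vinf s"
    unfolding robust_bellman_def bellman_int[OF Vinf_univ] s by simp
  finally have 1: "(\<lambda>l. Vn (Suc l) s) \<longlonglongrightarrow> Tr Vinf s" by (simp add: Vn_Suc)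
  have 2: "(\<lambda>l. Vn (Suc l) s) \<longlonglongrightarrow> Vinf s" by (rule LIMSEQ_Suc[OF Vinf_lim])
  show "Tr Vinf s = Vinf s" using 1 2 by (rule LIMSEQ_unique)
qed


lemma Vc_meas: "univ V \<Longrightarrow> (\<lambda>y. V (y, c q y)) \<in> borel_measurable (m s)"
  unfolding m_def univ_def univ_measurable_def
  by (rule measurable_compose_countable'[where I=UNIV, OF _ c_meas[OF kap_sets]])
     (use kap_prob kap_sets in auto)

lemma iota_meas: "(\<lambda>y. indicator (-F) (c q y) :: real) \<in> borel_measurable (m s)"
  unfolding m_def by (rule measurable_compose[OF c_meas[OF kap_sets]]) simp

lemma int_bdd: "f \<in> borel_measurable (m s) \<Longrightarrow> (\<And>y. \<bar>f y\<bar> \<le> B) \<Longrightarrow> integrable (m s) (f :: _ \<Rightarrow> real)"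
  using prob_space.finite_measure[OF m_prob] by (rule finite_measure.integrable_const_bound) auto

lemma clip_pos: "0 < clip01 a \<Longrightarrow> clip01 a \<le> a"
  unfolding clip01_def by auto

lemma clip_ge: "a \<le> 1 \<Longrightarrow> a \<le> clip01 a"
  unfolding clip01_def by auto

lemma unique:
  assumes dpos: "\<delta> > 0" and V01: "\<And>z. 0 \<le> V z" "\<And>z. V z \<le> 1" and Vu: "univ V"
    and fixp: "Tr V = V"
  shows "V = Vinf"
proof (rule ccontr)
  assume ne: "V \<noteq> Vinf"
  have WV: "Vinf z \<le> V z" for z by (rule Vinf_least[OF V01 fixp])
  obtain s0 where s0: "Vinf s0 < V s0"
    using ne WV by (metis ext order.not_eq_order_implies_strict)
  define D where "D z = V z - Vinf z" for z
  have D01: "0 \<le> D z" "D z \<le> 1" for z using WV[of z] V01[of z] Vinf_range[of z] by (auto simp: D_def)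
  have bD: "bdd_above (range D)" using D01 by (auto intro!: bdd_aboveI[where M=1])
  define d where "d = (SUP z. D z)"
  have Dd: "D z \<le> d" for z unfolding d_def by (rule cSUP_upper[OF _ bD]) simp
  have dpos': "0 < d" using Dd[of s0] s0 by (simp add: D_def)
  define \<alpha> where "\<alpha> = d * min 1 \<delta> / 2"
  have a1: "0 < \<alpha>" "\<alpha> \<le> d / 2" "\<alpha> \<le> d * \<delta> / 2"
    using dpos dpos' by (auto simp: \<alpha>_def min_def mult_left_mono)
  define \<Phi> where "\<Phi> z = D z + \<alpha> * V z" for z
  have b\<Phi>: "bdd_above (range \<Phi>)"
    using D01 V01 a1 by (auto intro!: bdd_aboveI[where M="1 + \<alpha>"] simp: \<Phi>_def add_mono)
  define M where "M = (SUP z. \<Phi> z)"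
  have \<Phi>M: "\<Phi> z \<le> M" for z unfolding M_def by (rule cSUP_upper[OF _ b\<Phi>]) simp
  have \<Phi>ge: "D z \<le> \<Phi> z" for z using a1 V01[of z] by (simp add: \<Phi>_def)
  have dM: "d \<le> M" unfolding d_def by (rule cSUP_least) (use \<Phi>ge \<Phi>M in \<open>blast intro: order_trans\<close>)+
  define \<eta> where "\<eta> = min (d / 4) (\<alpha> * \<delta> * d / (4 * (d + \<alpha>)))"
  have e1: "0 < \<eta>" using dpos dpos' a1 by (simp add: \<eta>_def)
  have e2: "\<eta> \<le> d / 4" unfolding \<eta>_def by (rule min.cobounded1)
  have e3: "\<eta> * (4 * (d + \<alpha>)) \<le> \<alpha> * \<delta> * d"
  proof -
    have "\<eta> \<le> \<alpha> * \<delta> * d / (4 * (d + \<alpha>))" unfolding \<eta>_def by (rule min.cobounded2)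
    then show ?thesis using dpos' a1 by (simp add: pos_le_divide_eq)
  qed
  obtain s where s: "M - \<eta> < \<Phi> s"
    using less_cSUP_iff[OF _ b\<Phi>, of "M - \<eta>"] e1 unfolding M_def[symmetric] by auto
  obtain x q where sxq: "s = (x, q)" by (cases s)
  have Ds: "d - \<eta> - \<alpha> < D s" using s dM V01[of s] a1 by (simp add: \<Phi>_def) (smt (verit) mult_left_le)
  have Vspos: "0 < V s" using Ds e2 a1 Vinf_range[of s] by (simp add: D_def)
  interpret prob_space "m s" by (rule m_prob)
  have sq: "snd s = q" using sxq by simp
  define \<iota> where "\<iota> y = (indicator (-F) (c q y) :: real)" for y
  define Vc where "Vc y = V (y, c q y)" for y
  define Wc where "Wc y = Vinf (y, c q y)" for y
  have [measurable]: "\<iota> \<in> borel_measurable (m s)" unfolding \<iota>_def by (rule iota_meas)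
  have [measurable]: "Vc \<in> borel_measurable (m s)" unfolding Vc_def by (rule Vc_meas[OF Vu])
  have [measurable]: "Wc \<in> borel_measurable (m s)" unfolding Wc_def by (rule Vc_meas[OF Vinf_univ])
  have \<iota>01: "\<iota> y = 0 \<or> \<iota> y = 1" for y by (simp add: \<iota>_def indicator_def)
  have Vc01: "0 \<le> Vc y" "Vc y \<le> 1" for y using V01 by (auto simp: Vc_def)
  have Wc01: "0 \<le> Wc y" "Wc y \<le> 1" for y using Vinf_range by (auto simp: Wc_def)
  have \<iota>b: "0 \<le> \<iota> y" "\<iota> y \<le> 1" for y by (simp_all add: \<iota>_def indicator_def)
  have int\<iota>: "integrable (m s) \<iota>" by (rule int_bdd[where B=1]) (use \<iota>b in auto)
  have intV: "integrable (m s) (\<lambda>y. \<iota> y * Vc y)"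
    by (rule int_bdd[where B=1]) (use \<iota>b Vc01 in \<open>auto simp: abs_mult intro: mult_le_one\<close>)
  have intW: "integrable (m s) (\<lambda>y. \<iota> y * Wc y)"
    by (rule int_bdd[where B=1]) (use \<iota>b Wc01 in \<open>auto simp: abs_mult intro: mult_le_one\<close>)
  define I where "I = integral\<^sup>L (m s) \<iota>"
  define B where "B = integral\<^sup>L (m s) (\<lambda>y. \<iota> y * Vc y)"
  define C where "C = integral\<^sup>L (m s) (\<lambda>y. \<iota> y * Wc y)"
  have fVV: "fV V q = (\<lambda>y. (1 - \<iota> y) + \<iota> y * Vc y)"
    using V01 by (auto simp: fV_def \<iota>_def Vc_def indicator_def fun_eq_iff)
  have fVW: "fV Vinf q = (\<lambda>y. (1 - \<iota> y) + \<iota> y * Wc y)"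
    using Vinf_range by (auto simp: fV_def \<iota>_def Wc_def indicator_def fun_eq_iff)
  have int1: "integral\<^sup>L (m s) (\<lambda>y. 1 - \<iota> y) = 1 - I"
    unfolding I_def by (subst Bochner_Integration.integral_diff[OF integrable_const int\<iota>]) (simp add: prob_space)
  have bV: "bellman t h L \<tau> F \<mu> V s = 1 - I + B"
    unfolding bellman_int[OF Vu] sq fVV B_def
    by (subst Bochner_Integration.integral_add) (use int\<iota> intV int1 in auto)
  have bW: "bellman t h L \<tau> F \<mu> Vinf s = 1 - I + C"
    unfolding bellman_int[OF Vinf_univ] sq fVW C_def
    by (subst Bochner_Integration.integral_add) (use int\<iota> intW int1 in auto)
  have I01: "0 \<le> I" "I \<le> 1"
  proof -
    show "0 \<le> I" unfolding I_def by (rule Bochner_Integration.integral_nonneg) (use \<iota>b in auto)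
    have "I \<le> integral\<^sup>L (m s) (\<lambda>_. 1::real)" unfolding I_def
      by (rule Bochner_Integration.integral_mono) (use int\<iota> \<iota>b in auto)
    then show "I \<le> 1" using prob_space by simp
  qed
  have CI: "C \<le> I" unfolding C_def I_def
    by (rule Bochner_Integration.integral_mono[OF intW int\<iota>]) (use \<iota>b Wc01 in \<open>auto intro: mult_left_le\<close>)
  have h1: "V s + \<delta> \<le> 1 - I + B"
    using clip_pos[of "bellman t h L \<tau> F \<mu> V s - \<delta>"] Vspos fun_cong[OF fixp, of s]
    unfolding robust_bellman_def bV by simp
  have h2: "1 - I + C - \<delta> \<le> Vinf s"
    using clip_ge[of "bellman t h L \<tau> F \<mu> Vinf s - \<delta>"] fun_cong[OF Vinf_fix, of s] CI dpos
    unfolding robust_bellman_def bW by simp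
  have h3: "B - C \<le> d * I"
  proof -
    have "B - C = integral\<^sup>L (m s) (\<lambda>y. \<iota> y * Vc y - \<iota> y * Wc y)"
      unfolding B_def C_def by (rule Bochner_Integration.integral_diff[symmetric, OF intV intW])
    also have "\<dots> \<le> integral\<^sup>L (m s) (\<lambda>y. d * \<iota> y)"
    proof (rule Bochner_Integration.integral_mono)
      show "integrable (m s) (\<lambda>y. \<iota> y * Vc y - \<iota> y * Wc y)" using intV intW by auto
      show "integrable (m s) (\<lambda>y. d * \<iota> y)" using int\<iota> by auto
      fix y
      have "D (y, c q y) \<le> d" by (rule Dd)
      then show "\<iota> y * Vc y - \<iota> y * Wc y \<le> d * \<iota> y"
        using \<iota>01[of y] by (auto simp: D_def Vc_def Wc_def)
    qed
    also have "\<dots> = d * I" unfolding I_def by simp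
    finally show ?thesis .
  qed
  have h4: "B - C + \<alpha> * B \<le> M * I"
  proof -
    have "B - C + \<alpha> * B = integral\<^sup>L (m s) (\<lambda>y. (\<iota> y * Vc y - \<iota> y * Wc y) + \<alpha> * (\<iota> y * Vc y))"
      unfolding B_def C_def using intV intW by simp
    also have "\<dots> \<le> integral\<^sup>L (m s) (\<lambda>y. M * \<iota> y)"
    proof (rule Bochner_Integration.integral_mono)
      show "integrable (m s) (\<lambda>y. (\<iota> y * Vc y - \<iota> y * Wc y) + \<alpha> * (\<iota> y * Vc y))" using intV intW by auto
      show "integrable (m s) (\<lambda>y. M * \<iota> y)" using int\<iota> by auto
      fix y
      have "\<Phi> (y, c q y) \<le> M" by (rule \<Phi>M)
      moreover have "0 \<le> M" using dM dpos' by simp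
      ultimately show "(\<iota> y * Vc y - \<iota> y * Wc y) + \<alpha> * (\<iota> y * Vc y) \<le> M * \<iota> y"
        using \<iota>01[of y] by (auto simp: \<Phi>_def D_def Vc_def Wc_def)
    qed
    also have "\<dots> = M * I" unfolding I_def by simp
    finally show ?thesis .
  qed
  have M0: "0 \<le> M" using dM dpos' by simp
  have "M * I \<le> M" using M0 I01 by (simp add: mult_left_le)
  have DsBC: "D s \<le> B - C" using h1 h2 dpos by (simp add: D_def)
  have k1: "M > M - \<eta> + \<alpha> * \<delta> - \<alpha> * (1 - I)"
  proof -
    have "\<Phi> s + \<alpha> * \<delta> - \<alpha> * (1 - I) = D s + \<alpha> * (V s + \<delta> - 1 + I)"
      by (simp add: \<Phi>_def algebra_simps)
    also have "\<dots> \<le> (B - C) + \<alpha> * B" using DsBC h1 a1 by (smt (verit) mult_left_mono)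
    also have "\<dots> \<le> M" using h4 \<open>M * I \<le> M\<close> by simp
    finally show ?thesis using s by simp
  qed
  have k2: "d * (1 - I) < \<eta> + \<alpha>" using Ds DsBC h3 by (simp add: algebra_simps)
  have k3: "\<alpha> * (d * (1 - I)) < \<alpha> * (\<eta> + \<alpha>)" using k2 a1 by simp
  have k4: "d * (\<alpha> * \<delta> - \<eta>) < d * (\<alpha> * (1 - I))" using k1 dpos' by simp
  have k5: "\<alpha> * \<alpha> \<le> \<alpha> * (d * \<delta> / 2)" using a1 by simp
  have "d * (\<alpha> * \<delta>) < \<eta> * (d + \<alpha>) + \<alpha> * \<alpha>"
    using k3 k4 by (simp add: algebra_simps)
  then have "4 * (d * (\<alpha> * \<delta>)) < \<alpha> * \<delta> * d + 2 * (\<alpha> * (d * \<delta>))"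
    using e3 k5 by (simp add: algebra_simps)
  then show False using a1 dpos dpos' by (simp add: algebra_simps)
qed

end



theorem lemma1:
  fixes t :: "'x::polish_space \<Rightarrow> 'u::polish_space \<Rightarrow> 'x measure"
    and h :: "'x \<Rightarrow> 'y::metric_space"
    and L :: "'y \<Rightarrow> 'ap::finite set"
    and \<tau> :: "'q::finite \<Rightarrow> 'ap set \<Rightarrow> 'q"
    and F :: "'q set"
    and \<mu> :: "'x \<times> 'q \<Rightarrow> 'u measure"
    and \<delta> :: real
  assumes kernel_prob: "\<And>x u. prob_space (t x u)"
    and kernel_sets: "\<And>x u. sets (t x u) = sets (borel :: 'x measure)"
    and kernel_meas: "(\<lambda>(x, u). t x u) \<in> (borel :: ('x \<times> 'u) measure) \<rightarrow>\<^sub>M prob_algebra borel"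
    and h_meas: "h \<in> borel_measurable borel"
    and L_meas: "L \<in> (borel :: 'y measure) \<rightarrow>\<^sub>M count_space UNIV"
    and delta_nonneg: "\<delta> \<ge> 0"
    and mu_prob: "\<And>x q. prob_space (\<mu> (x, q))"
    and mu_sets: "\<And>x q. sets (\<mu> (x, q)) = sets (borel :: 'u measure)"
    and mu_univ: "\<And>q. univ_measurable (prob_algebra (borel :: 'u measure)) (\<lambda>x. \<mu> (x, q))"
  defines "T \<equiv> robust_bellman t h L \<tau> F \<mu> \<delta>"
  shows
    "(\<forall>V W. (\<forall>s. V s \<in> {0..1}) \<longrightarrow> (\<forall>s. W s \<in> {0..1}) \<longrightarrow> (\<forall>s. W s \<le> V s)
        \<longrightarrow> (\<forall>s. T W s \<le> T V s))
     \<and> (\<forall>s. incseq (\<lambda>l. (T ^^ l) (\<lambda>_. 0) s) \<and> convergent (\<lambda>l. (T ^^ l) (\<lambda>_. 0) s))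
     \<and> (\<delta> > 0 \<longrightarrow>
        (let Vinf = (\<lambda>s. lim (\<lambda>l. (T ^^ l) (\<lambda>_. 0) s)) in
          (\<forall>s. Vinf s \<in> {0..1}) \<and> (\<forall>q. univ_measurable borel (\<lambda>x. Vinf (x, q))) \<and> T Vinf = Vinf
          \<and> (\<forall>V. (\<forall>s. V s \<in> {0..1}) \<longrightarrow> (\<forall>q. univ_measurable borel (\<lambda>x. V (x, q)))
                 \<longrightarrow> T V = V \<longrightarrow> V = Vinf)))"
proof -
  interpret bsetup t h L \<tau> F \<mu> \<delta>
    by (rule bsetup.intro[OF kernel_prob kernel_sets kernel_meas h_meas L_meas delta_nonneg mu_prob mu_sets mu_univ])
  have TT: "T = Tr" by (simp add: T_def)
  have it: "(T ^^ l) (\<lambda>_. 0) = Vn l" for l by (simp add: TT Vn_def)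
  have lim_eq: "(\<lambda>s. lim (\<lambda>l. Vn l s)) = Vinf"
    by (simp add: Vinf_def fun_eq_iff)
  show ?thesis
    unfolding it lim_eq Let_def
  proof (intro conjI allI impI)
    fix V W :: "'x \<times> 'q \<Rightarrow> real" and s
    assume "\<forall>s. V s \<in> {0..1}" "\<forall>s. W s \<in> {0..1}" "\<forall>s. W s \<le> V s"
    then show "T W s \<le> T V s" unfolding TT by (intro T_mono) auto
  next
    fix s show "incseq (\<lambda>l. Vn l s)" by (rule Vn_incseq)
  next
    fix s show "convergent (\<lambda>l. Vn l s)" using Vinf_lim by (rule convergentI)
  next
    fix s assume "0 < \<delta>" show "Vinf s \<in> {0..1}" using Vinf_range[of s] by simp
  next
    fix q assume "0 < \<delta>" show "univ_measurable borel (\<lambda>x. Vinf (x, q))" using Vinf_univ by (simp add: univ_def)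
  next
    assume "0 < \<delta>" show "T Vinf = Vinf" unfolding TT by (rule Vinf_fix)
  next
    fix V :: "'x \<times> 'q \<Rightarrow> real"
    assume d: "0 < \<delta>" and V: "\<forall>s. V s \<in> {0..1}" "\<forall>q. univ_measurable borel (\<lambda>x. V (x, q))" "T V = V"
    show "V = Vinf"
      by (rule unique[OF d]) (use V in \<open>auto simp: univ_def TT\<close>)
  qed
qed

end
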